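(* Let $R$ be an abelian Rickart $*$-ring and $a,b\in R$. Then $a\perp b$ if and only if $RP(a)RP(b)=0$.
   Context: A Rickart $*$-ring is a $*$-ring in which the right annihilator of every element is generated by a projection ($e=e^2=e^*$); it has unity. For $a\in R$, $RP(a)$ is the unique projection $e$ with $ae=a$ and such that $ax=0\iff ex=0$; equivalently $\{x:ax=0\}=(1-RP(a))R$. Abelian: all idempotents central. Orthogonality: $a\perp b$ iff there is $x\in R$ with $xa=a=ax^*$ and $xb=0=bx^*$. *)

theory Defs
  imports Main
begin

definition star_ring :: "('a::ring_1 \<Rightarrow> 'a) \<Rightarrow> bool" where
  "star_ring star \<longleftrightarrow>
     (\<forall>a b. star (a + b) = star a + star b) \<and>
     (\<forall>a b. star (a * b) = star b * star a) \<and>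
     (\<forall>a. star (star a) = a)"

definition projection :: "('a::ring_1 \<Rightarrow> 'a) \<Rightarrow> 'a \<Rightarrow> bool" where
  "projection star e \<longleftrightarrow> e * e = e \<and> star e = e"

definition rickart_star_ring :: "('a::ring_1 \<Rightarrow> 'a) \<Rightarrow> bool" where
  "rickart_star_ring star \<longleftrightarrow> star_ring star \<and>
     (\<forall>a::'a. \<exists>e. projection star e \<and> {x. a * x = 0} = {e * y | y. True})"

definition abelian_ring :: "'a::ring_1 itself \<Rightarrow> bool" where
  "abelian_ring _ \<longleftrightarrow> (\<forall>e::'a. e * e = e \<longrightarrow> (\<forall>x. e * x = x * e))"

definition RP :: "('a::ring_1 \<Rightarrow> 'a) \<Rightarrow> 'a \<Rightarrow> 'a" where
  "RP star a = (THE e. projection star e \<and> a * e = a \<and> (\<forall>x. a * x = 0 \<longleftrightarrow> e * x = 0))"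

definition orth :: "('a::ring_1 \<Rightarrow> 'a) \<Rightarrow> 'a \<Rightarrow> 'a \<Rightarrow> bool" where
  "orth star a b \<longleftrightarrow> (\<exists>x. x * a = a \<and> a = a * star x \<and> x * b = 0 \<and> b * star x = 0)"

end

theory Submission
  imports Defs
begin

lemma star_one:
  assumes "star_ring star" shows "star (1::'a::ring_1) = 1"
proof -
  have "star (star 1 * 1) = star 1 * star (star (1::'a))" using assms unfolding star_ring_def by blast
  then show ?thesis using assms unfolding star_ring_def by simp
qed

lemma star_diff:
  assumes "star_ring star" shows "star ((x::'a::ring_1) - y) = star x - star y"
proof -
  have "star ((x - y) + y) = star (x - y) + star y" using assms unfolding star_ring_def by blast
  then show ?thesis by (simp add: algebra_simps)
qed

lemma RP_props:
  fixes star :: "'a::ring_1 \<Rightarrow> 'a"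
  assumes R: "rickart_star_ring star"
  shows "projection star (RP star a) \<and> a * RP star a = a \<and> (\<forall>x. a * x = 0 \<longleftrightarrow> RP star a * x = 0)"
proof -
  have S: "star_ring star" using R unfolding rickart_star_ring_def by blast
  obtain e where e: "projection star e" "{x. a * x = 0} = {e * y | y. True}"
    using R unfolding rickart_star_ring_def by blast
  define p where "p = 1 - e"
  have ee: "e * e = e" "star e = e" using e(1) unfolding projection_def by auto
  have ae: "a * e = 0" proof -
    have "e \<in> {e * y | y. True}" by (rule CollectI, rule exI[of _ 1], simp)
    then show ?thesis using e(2) by blast
  qed
  have P: "projection star p \<and> a * p = a \<and> (\<forall>x. a * x = 0 \<longleftrightarrow> p * x = 0)"
  proof (intro conjI allI)
    show "projection star p" unfolding projection_def p_def
      using ee star_diff[OF S, of 1 e] star_one[OF S] by (simp add: algebra_simps)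
    show "a * p = a" unfolding p_def using ae by (simp add: algebra_simps)
    fix x
    show "a * x = 0 \<longleftrightarrow> p * x = 0"
    proof
      assume "a * x = 0"
      then have "x \<in> {e * y | y. True}" using e(2) by blast
      then obtain y where "x = e * y" by blast
      then show "p * x = 0" unfolding p_def
        by (simp add: algebra_simps ee(1) flip: mult.assoc)
    next
      assume "p * x = 0"
      then have "x = e * x" unfolding p_def by (simp add: algebra_simps)
      then have "x \<in> {e * y | y. True}" by blast
      then show "a * x = 0" using e(2) by blast
    qed
  qed
  have U: "q = p" if q: "projection star q \<and> a * q = a \<and> (\<forall>x. a * x = 0 \<longleftrightarrow> q * x = 0)" for q
  proof -
    have "a * (1 - p) = 0" using P by (simp add: algebra_simps)
    then have "q * (1 - p) = 0" using q by blast
    then have qp: "q * p = q" by (simp add: algebra_simps)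
    have "a * (1 - q) = 0" using q by (simp add: algebra_simps)
    then have "p * (1 - q) = 0" using P by blast
    then have pq: "p * q = p" by (simp add: algebra_simps)
    have "q = star q" using q unfolding projection_def by simp
    also have "\<dots> = star (q * p)" using qp by simp
    also have "\<dots> = star p * star q" using S unfolding star_ring_def by blast
    also have "\<dots> = p * q" using P q unfolding projection_def by simp
    finally show ?thesis using pq by simp
  qed
  have "RP star a = p" unfolding RP_def
    apply (rule the_equality) using P apply blast using U by blast
  then show ?thesis using P by simp
qed

theorem mainTheorem13:
  fixes star :: "'a::ring_1 \<Rightarrow> 'a" and a b :: 'a
  assumes "rickart_star_ring star"
    and "abelian_ring TYPE('a)"
  shows "orth star a b \<longleftrightarrow> RP star a * RP star b = 0"
proof -
  have S: "star_ring star" using assms(1) unfolding rickart_star_ring_def by blast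
  define p where "p = RP star a"
  define q where "q = RP star b"
  have Pa: "p * p = p" "star p = p" "a * p = a" "\<And>x. a * x = 0 \<longleftrightarrow> p * x = 0"
    using RP_props[OF assms(1), of a] unfolding p_def projection_def by auto
  have Pb: "q * q = q" "star q = q" "b * q = b" "\<And>x. b * x = 0 \<longleftrightarrow> q * x = 0"
    using RP_props[OF assms(1), of b] unfolding q_def projection_def by auto
  have cp: "\<And>x. p * x = x * p" using assms(2) Pa(1) unfolding abelian_ring_def by blast
  show ?thesis unfolding p_def[symmetric] q_def[symmetric]
  proof
    assume "orth star a b"
    then obtain x where x: "x * a = a" "a = a * star x" "x * b = 0" "b * star x = 0"
      unfolding orth_def by blast
    have qx: "q * star x = 0" using x(4) Pb(4) by blast
    have "a * (1 - star x) = 0" using x(2) by (simp add: algebra_simps)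
    then have "p * (1 - star x) = 0" using Pa(4) by blast
    then have px: "p = p * star x" by (simp add: algebra_simps)
    have "p * q = q * p" using cp by simp
    also have "\<dots> = q * (p * star x)" using px by simp
    also have "\<dots> = p * (q * star x)" using cp by (metis mult.assoc)
    also have "\<dots> = 0" using qx by simp
    finally show "p * q = 0" .
  next
    assume pq: "p * q = 0"
    have bp: "b * p = 0"
    proof -
      have "b * p = b * q * p" using Pb(3) by simp
      also have "\<dots> = b * (p * q)" using cp by (simp add: mult.assoc)
      finally show ?thesis using pq by simp
    qed
    show "orth star a b" unfolding orth_def
    proof (rule exI[of _ p], intro conjI)
      show "p * a = a" using cp Pa(3) by simp
      show "a = a * star p" using Pa by simp
      show "p * b = 0" using cp bp by simp
      show "b * star p = 0" using Pa(2) bp by simp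
    qed
  qed
qed

end
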